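(* Let $1\le k\le n$. There is no element $g\in\mathrm{Sp}(n,1)$ such that every element of $g\left(I_{n-k}\oplus\mathrm{Sp}(k,1)\right)g^{-1}$ has trace a complex number.
   Context: $\mathrm{Sp}(n,1)=\{A\in\mathrm{GL}(n+1,\mathbb H):A^*I_{n,1}A=I_{n,1}\}$ with $I_{n,1}=\mathrm{diag}(1,\dots,1,-1)$ ($n$ ones), $\mathbb H$ the quaternions. $I_{n-k}\oplus\mathrm{Sp}(k,1)$ denotes the subgroup of block-diagonal matrices $\mathrm{diag}(I_{n-k},B)$ with $I_{n-k}$ the identity matrix of size $n-k$ and $B\in\mathrm{Sp}(k,1)$ (defined analogously with $I_{k,1}$). The trace of a quaternionic matrix is the sum of its diagonal entries; "complex number" means an element of $\mathbb C=\mathbb R+\mathbb Ri\subset\mathbb H$. *)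

theory Defs
  imports Complex_Main
begin

datatype quat = Quat (qRe: real) (qI: real) (qJ: real) (qK: real)

instantiation quat :: ring_1
begin
definition "0 = Quat 0 0 0 0"
definition "1 = Quat 1 0 0 0"
definition "x + y = Quat (qRe x + qRe y) (qI x + qI y) (qJ x + qJ y) (qK x + qK y)"
definition "x - y = Quat (qRe x - qRe y) (qI x - qI y) (qJ x - qJ y) (qK x - qK y)"
definition "- x = Quat (- qRe x) (- qI x) (- qJ x) (- qK x)"
text \<open>Hamilton product: i^2 = j^2 = k^2 = ijk = -1.\<close>
definition "x * y = Quat
   (qRe x * qRe y - qI x * qI y - qJ x * qJ y - qK x * qK y)
   (qRe x * qI y + qI x * qRe y + qJ x * qK y - qK x * qJ y)
   (qRe x * qJ y - qI x * qK y + qJ x * qRe y + qK x * qI y)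
   (qRe x * qK y + qI x * qJ y - qJ x * qI y + qK x * qRe y)"
instance
  by standard (auto simp: zero_quat_def one_quat_def plus_quat_def minus_quat_def
      uminus_quat_def times_quat_def algebra_simps intro: quat.expand)
end

definition qcnj :: "quat \<Rightarrow> quat" where
  "qcnj x = Quat (qRe x) (- qI x) (- qJ x) (- qK x)"

definition is_complex_quat :: "quat \<Rightarrow> bool" where
  "is_complex_quat x \<longleftrightarrow> qJ x = 0 \<and> qK x = 0"

text \<open>An m x m quaternionic matrix is represented by a function
  nat \<Rightarrow> nat \<Rightarrow> quat whose entries vanish outside the index range {0..<m}.\<close>
type_synonym qmat = "nat \<Rightarrow> nat \<Rightarrow> quat"

definition qmat_of_size :: "nat \<Rightarrow> qmat \<Rightarrow> bool" where
  "qmat_of_size m A \<longleftrightarrow> (\<forall>i j. (m \<le> i \<or> m \<le> j) \<longrightarrow> A i j = 0)"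

definition qmat_mult :: "nat \<Rightarrow> qmat \<Rightarrow> qmat \<Rightarrow> qmat" where
  "qmat_mult m A B = (\<lambda>i j. \<Sum>l<m. A i l * B l j)"

definition qmat_adj :: "qmat \<Rightarrow> qmat" where
  "qmat_adj A = (\<lambda>i j. qcnj (A j i))"

definition qmat_id :: "nat \<Rightarrow> qmat" where
  "qmat_id m = (\<lambda>i j. if i = j \<and> i < m then 1 else 0)"

definition qmat_trace :: "nat \<Rightarrow> qmat \<Rightarrow> quat" where
  "qmat_trace m A = (\<Sum>i<m. A i i)"

definition qmat_inverse_of :: "nat \<Rightarrow> qmat \<Rightarrow> qmat \<Rightarrow> bool" where
  "qmat_inverse_of m B A \<longleftrightarrow> qmat_of_size m B \<and>
     qmat_mult m A B = qmat_id m \<and> qmat_mult m B A = qmat_id m"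

definition qGL :: "nat \<Rightarrow> qmat set" where
  "qGL m = {A. qmat_of_size m A \<and> (\<exists>B. qmat_inverse_of m B A)}"

definition I_n1 :: "nat \<Rightarrow> qmat" where
  "I_n1 n = (\<lambda>i j. if i = j \<and> i < n then 1 else if i = n \<and> j = n then -1 else 0)"

definition Sp_n1 :: "nat \<Rightarrow> qmat set" where
  "Sp_n1 n = {A \<in> qGL (n+1).
      qmat_mult (n+1) (qmat_mult (n+1) (qmat_adj A) (I_n1 n)) A = I_n1 n}"

definition block_embed :: "nat \<Rightarrow> nat \<Rightarrow> qmat \<Rightarrow> qmat" where
  "block_embed n k B = (\<lambda>i j.
      if i < n - k \<and> j < n - k then (if i = j then 1 else 0)
      else if n - k \<le> i \<and> n - k \<le> j \<and> i \<le> n \<and> j \<le> n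
        then B (i - (n - k)) (j - (n - k))
      else 0)"

definition Sp_block :: "nat \<Rightarrow> nat \<Rightarrow> qmat set" where
  "Sp_block n k = block_embed n k ` Sp_n1 k"

end

theory Submission
  imports Defs
begin

definition qn :: "quat \<Rightarrow> real" where
  "qn x = qRe x ^ 2 + qI x ^ 2 + qJ x ^ 2 + qK x ^ 2"

definition qdiag :: "nat \<Rightarrow> (nat \<Rightarrow> quat) \<Rightarrow> qmat" where
  "qdiag m d = (\<lambda>i j. if i = j \<and> i < m then d i else 0)"

lemma quat_sel_simps[simp]:
  "qRe 0 = 0" "qI 0 = 0" "qJ 0 = 0" "qK 0 = 0"
  "qRe 1 = 1" "qI 1 = 0" "qJ 1 = 0" "qK 1 = 0"
  "qRe (x + y) = qRe x + qRe y" "qI (x + y) = qI x + qI y"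
  "qJ (x + y) = qJ x + qJ y" "qK (x + y) = qK x + qK y"
  "qRe (x - y) = qRe x - qRe y" "qI (x - y) = qI x - qI y"
  "qJ (x - y) = qJ x - qJ y" "qK (x - y) = qK x - qK y"
  "qRe (- x) = - qRe x" "qI (- x) = - qI x" "qJ (- x) = - qJ x" "qK (- x) = - qK x"
  "qRe (qcnj x) = qRe x" "qI (qcnj x) = - qI x" "qJ (qcnj x) = - qJ x" "qK (qcnj x) = - qK x"
  by (simp_all add: zero_quat_def one_quat_def plus_quat_def minus_quat_def uminus_quat_def qcnj_def)

lemma quat_mult_sel[simp]:
  "qRe (x * y) = qRe x * qRe y - qI x * qI y - qJ x * qJ y - qK x * qK y"
  "qI (x * y) = qRe x * qI y + qI x * qRe y + qJ x * qK y - qK x * qJ y"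
  "qJ (x * y) = qRe x * qJ y - qI x * qK y + qJ x * qRe y + qK x * qI y"
  "qK (x * y) = qRe x * qK y + qI x * qJ y - qJ x * qI y + qK x * qRe y"
  by (simp_all add: times_quat_def)

lemma quat_eqI: "qRe x = qRe y \<Longrightarrow> qI x = qI y \<Longrightarrow> qJ x = qJ y \<Longrightarrow> qK x = qK y \<Longrightarrow> x = y"
  by (rule quat.expand) simp

lemma qn_mult: "qn (x * y) = qn x * qn y"
  unfolding qn_def by simp algebra

lemma qn_cnj: "qn (qcnj x) = qn x" unfolding qn_def by simp

lemma qn_nonneg: "qn x \<ge> 0" unfolding qn_def by simp

lemma mult_cnj: "x * qcnj x = Quat (qn x) 0 0 0" "qcnj x * x = Quat (qn x) 0 0 0"
  by (auto intro!: quat_eqI simp: qn_def power2_eq_square algebra_simps)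

lemma qJ_le: "qJ x \<le> sqrt (qn x)"
proof -
  have "qJ x ^ 2 \<le> qn x" unfolding qn_def by simp
  then show ?thesis using real_le_rsqrt by blast
qed

lemma qJ_sum: "qJ (sum f A) = (\<Sum>x\<in>A. qJ (f x))"
  by (induction A rule: infinite_finite_induct) auto
lemma qRe_sum: "qRe (sum f A) = (\<Sum>x\<in>A. qRe (f x))"
  by (induction A rule: infinite_finite_induct) auto

lemma qcnj_0[simp]: "qcnj 0 = 0" by (rule quat_eqI) simp_all
lemma qcnj_1[simp]: "qcnj 1 = 1" by (rule quat_eqI) simp_all

lemma qmat_mult_assoc:
  "qmat_mult m (qmat_mult m A B) C = qmat_mult m A (qmat_mult m B C)"
  unfolding qmat_mult_def
  by (auto simp: sum_distrib_left sum_distrib_right mult.assoc intro!: ext sum.swap[THEN trans])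

lemma mult_qdiag_right: "j < m \<Longrightarrow> qmat_mult m A (qdiag m d) i j = A i j * d j"
  unfolding qmat_mult_def qdiag_def
  by (simp add: if_distrib cong: if_cong)

lemma mult_qdiag_left: "i < m \<Longrightarrow> qmat_mult m (qdiag m d) A i j = d i * A i j"
proof -
  assume "i < m"
  have "qmat_mult m (qdiag m d) A i j = (\<Sum>l<m. if l = i then d i * A i j else 0)"
    unfolding qmat_mult_def qdiag_def by (rule sum.cong) auto
  also have "\<dots> = d i * A i j" using \<open>i < m\<close> by simp
  finally show ?thesis .
qed

lemma mult_qdiag_qdiag: "qmat_mult m (qdiag m d) (qdiag m e) = qdiag m (\<lambda>i. d i * e i)"
proof (intro ext)
  fix i j
  show "qmat_mult m (qdiag m d) (qdiag m e) i j = qdiag m (\<lambda>i. d i * e i) i j"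
  proof (cases "j < m")
    case True then show ?thesis by (simp add: mult_qdiag_right) (simp add: qdiag_def)
  next
    case False then show ?thesis unfolding qmat_mult_def qdiag_def by auto
  qed
qed

lemma I_n1_diag: "I_n1 n = qdiag (Suc n) (\<lambda>i. if i < n then 1 else -1)"
  unfolding I_n1_def qdiag_def by (auto intro!: ext)

lemma id_diag: "qmat_id m = qdiag m (\<lambda>_. 1)"
  unfolding qmat_id_def qdiag_def by (auto intro!: ext)

lemma adj_diag: "qmat_adj (qdiag m d) = qdiag m (\<lambda>i. qcnj (d i))"
  unfolding qmat_adj_def qdiag_def by (auto intro!: ext)

lemma scalar_J: "qJ (p * (Quat r 0 0 0 * (qcnj p * Quat 0 0 1 0 * p)) * qcnj p) = r * qn p ^ 2"
  unfolding qn_def by simp algebra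

lemma qn_Quat: "qn (Quat r 0 0 0) = r ^ 2" "qn (Quat 0 0 1 0) = 1"
  unfolding qn_def by simp_all

lemma B_in_Sp:
  assumes "qn u = 1"
  shows "qdiag (Suc k) (\<lambda>a. if a < k then 1 else u) \<in> Sp_n1 k"
proof -
  have u1: "u * qcnj u = 1" "qcnj u * u = 1"
    using assms by (simp_all add: mult_cnj one_quat_def)
  have sz: "qmat_of_size (Suc k) (qdiag (Suc k) d)" for d
    unfolding qmat_of_size_def qdiag_def by auto
  have inv: "qmat_inverse_of (Suc k) (qdiag (Suc k) (\<lambda>a. if a < k then 1 else qcnj u))
              (qdiag (Suc k) (\<lambda>a. if a < k then 1 else u))"
    unfolding qmat_inverse_of_def using sz
    by (simp add: mult_qdiag_qdiag id_diag u1 if_distrib cong: if_cong)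
  have "qmat_mult (Suc k) (qmat_mult (Suc k) (qmat_adj (qdiag (Suc k) (\<lambda>a. if a < k then 1 else u)))
          (I_n1 k)) (qdiag (Suc k) (\<lambda>a. if a < k then 1 else u)) = I_n1 k"
    unfolding I_n1_diag adj_diag mult_qdiag_qdiag
    by (rule arg_cong[where f="qdiag (Suc k)"]) (auto intro!: ext simp: u1)
  then show ?thesis
    unfolding Sp_n1_def qGL_def using sz inv by auto
qed

lemma block_diag:
  assumes "1 \<le> k" "k \<le> n"
  shows "block_embed n k (qdiag (Suc k) (\<lambda>a. if a < k then 1 else u)) =
         qdiag (Suc n) (\<lambda>l. if l < n then 1 else u)"
  using assms unfolding block_embed_def qdiag_def by (auto intro!: ext)

theorem proposition3p2:
  fixes n k :: nat
  assumes "1 \<le> k" and "k \<le> n"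
  shows "\<not> (\<exists>g \<in> Sp_n1 n. \<exists>ginv. qmat_inverse_of (n+1) ginv g \<and>
            (\<forall>A \<in> Sp_block n k.
               is_complex_quat (qmat_trace (n+1) (qmat_mult (n+1) (qmat_mult (n+1) g A) ginv))))"
proof
  assume "\<exists>g \<in> Sp_n1 n. \<exists>ginv. qmat_inverse_of (n+1) ginv g \<and>
            (\<forall>A \<in> Sp_block n k.
               is_complex_quat (qmat_trace (n+1) (qmat_mult (n+1) (qmat_mult (n+1) g A) ginv)))"
  then obtain g h where gSp: "g \<in> Sp_n1 n" and inv: "qmat_inverse_of (Suc n) h g"
    and tr: "\<And>A. A \<in> Sp_block n k \<Longrightarrow>
               is_complex_quat (qmat_trace (Suc n) (qmat_mult (Suc n) (qmat_mult (Suc n) g A) h))"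
    by auto
  define e :: "nat \<Rightarrow> quat" where "e i = (if i < n then 1 else -1)" for i
  define E where "E = I_n1 n"
  have Ed: "E = qdiag (Suc n) e" unfolding E_def e_def I_n1_diag ..
  define M where "M = qmat_mult (Suc n)"
  have gE: "M (M (qmat_adj g) E) g = E" using gSp unfolding Sp_n1_def E_def M_def by simp
  have gh: "M g h = qmat_id (Suc n)" using inv unfolding qmat_inverse_of_def M_def by simp
  have EE: "M E E = qmat_id (Suc n)"
    unfolding M_def Ed mult_qdiag_qdiag id_diag e_def
    by (rule arg_cong[where f="qdiag (Suc n)"]) auto
  have hrow: "h n i = - (qcnj (g i n) * e i)" if "i < Suc n" for i
  proof -
    have "h n i = M (qmat_id (Suc n)) h n i"
      unfolding M_def id_diag by (simp add: mult_qdiag_left)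
    also have "\<dots> = M (M E (M (M (qmat_adj g) E) g)) h n i" using EE gE by simp
    also have "\<dots> = M (M E (M (qmat_adj g) E)) (M g h) n i"
      unfolding M_def qmat_mult_assoc ..
    also have "\<dots> = M E (M (qmat_adj g) E) n i"
      using gh that unfolding M_def id_diag by (simp add: mult_qdiag_right)
    also have "\<dots> = - (qcnj (g i n) * e i)"
      unfolding M_def Ed using that
      by (simp add: mult_qdiag_right mult_qdiag_left e_def qmat_adj_def)
    finally show ?thesis .
  qed
  have colq: "M (M (qmat_adj g) E) g n n = -1" using gE unfolding E_def I_n1_def by simp
  have "M (M (qmat_adj g) E) g n n = (\<Sum>l<Suc n. qcnj (g l n) * e l * g l n)"
    unfolding M_def qmat_mult_def[of _ "qmat_mult _ _ _"] Ed
    by (rule sum.cong) (auto simp: mult_qdiag_right qmat_adj_def)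
  then have "(\<Sum>l<Suc n. qcnj (g l n) * e l * g l n) = -1" using colq by metis
  then have "qRe (\<Sum>l<Suc n. qcnj (g l n) * e l * g l n) = -1" by simp
  moreover have "qRe (qcnj (g l n) * e l * g l n) = (if l < n then qn (g l n) else - qn (g l n))" for l
    unfolding e_def qn_def by (auto simp: power2_eq_square)
  ultimately have col: "(\<Sum>l<n. qn (g l n)) - qn (g n n) = -1"
    by (simp add: qRe_sum)
  define p where "p = g n n"
  define N where "N = qn p"
  have sumnn: "(\<Sum>l<n. qn (g l n)) \<ge> 0" by (rule sum_nonneg) (simp add: qn_nonneg)
  have N1: "N \<ge> 1" using col sumnn unfolding N_def p_def by linarith
  define c where "c = (\<Sum>i<Suc n. \<Sum>l<n. g i l * h l i)"
  define \<tau> where "\<tau> u = (\<Sum>i<Suc n. g i n * u * h n i)" for u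
  have trc: "qJ c + qJ (\<tau> u) = 0" if "qn u = 1" for u
  proof -
    let ?D = "qdiag (Suc n) (\<lambda>l. if l < n then 1 else u)"
    have "?D \<in> Sp_block n k"
      unfolding Sp_block_def using B_in_Sp[OF that, of k] block_diag[OF assms, of u]
      by (metis image_eqI)
    then have cx: "is_complex_quat (qmat_trace (Suc n) (M (M g ?D) h))"
      using tr unfolding M_def by blast
    have "qmat_trace (Suc n) (M (M g ?D) h) =
          (\<Sum>i<Suc n. \<Sum>l<Suc n. g i l * (if l < n then 1 else u) * h l i)"
      unfolding qmat_trace_def M_def qmat_mult_def[of _ "qmat_mult _ _ _"]
      by (intro sum.cong refl) (simp add: mult_qdiag_right)
    also have "\<dots> = c + \<tau> u"
      unfolding c_def \<tau>_def by (simp add: sum.distrib)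
    finally show ?thesis using cx unfolding is_complex_quat_def by simp
  qed
  have t1: "qJ c + qJ (\<tau> 1) = 0" by (rule trc) (simp add: qn_def)
  have t2: "qJ c + qJ (\<tau> (-1)) = 0" by (rule trc) (simp add: qn_def)
  have "\<tau> (-1) = - \<tau> 1"
    unfolding \<tau>_def by (simp add: sum_negf)
  then have "qJ (\<tau> (-1)) = - qJ (\<tau> 1)" by simp
  then have c0: "qJ c = 0" using t1 t2 by simp
  define q0 where "q0 = Quat (1/N) 0 0 0 * (qcnj p * Quat 0 0 1 0 * p)"
  have qn0: "qn q0 = 1" unfolding q0_def qn_mult qn_Quat qn_cnj N_def[symmetric]
    using N1 by (simp add: power2_eq_square)
  have tz: "qJ (\<tau> q0) = 0" using trc[OF qn0] c0 by simp
  have term_i: "qJ (g i n * q0 * h n i) \<ge> - qn (g i n)" if "i < n" for i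
  proof -
    have "h n i = - qcnj (g i n)" using hrow[of i] that unfolding e_def by simp
    then have "qJ (g i n * q0 * h n i) = - qJ (g i n * q0 * qcnj (g i n))" by simp
    moreover have "qJ (g i n * q0 * qcnj (g i n)) \<le> qn (g i n)"
      using qJ_le[of "g i n * q0 * qcnj (g i n)"]
      unfolding qn_mult qn_cnj qn0 by (simp add: qn_nonneg)
    ultimately show ?thesis by simp
  qed
  have term_n: "qJ (g n n * q0 * h n n) = N"
  proof -
    have "h n n = qcnj p" using hrow[of n] unfolding e_def p_def by simp
    then have "g n n * q0 * h n n = p * (Quat (1/N) 0 0 0 * (qcnj p * Quat 0 0 1 0 * p)) * qcnj p"
      unfolding q0_def p_def by simp
    then have "qJ (g n n * q0 * h n n) = (1/N) * qn p ^ 2" by (simp only: scalar_J)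
    then show ?thesis using N1 unfolding N_def[symmetric] by (simp add: power2_eq_square)
  qed
  have "qJ (\<tau> q0) = (\<Sum>i<n. qJ (g i n * q0 * h n i)) + N"
    unfolding \<tau>_def qJ_sum using term_n by simp
  also have "\<dots> \<ge> (\<Sum>i<n. - qn (g i n)) + N"
    by (intro add_right_mono sum_mono term_i) simp
  finally have "0 \<ge> N - (\<Sum>i<n. qn (g i n))" using tz by (simp add: sum_negf)
  moreover have "(\<Sum>i<n. qn (g i n)) = N - 1" using col unfolding N_def p_def by simp
  ultimately show False by simp
qed

end
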